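(* Let $\mathbb{K}$ be a field and consider the algebra $\mathbb{K}\langle\alpha_2,\alpha_3\rangle/I$, where $I$ is the two-sided ideal $$I=\langle\alpha_2^3,\ \alpha_3^2-\alpha_3,\ (\alpha_3\alpha_2)^2\alpha_3-4\alpha_3\alpha_2^2\alpha_3\rangle.$$ Let $R=\mathbb{K}\langle\alpha_2\rangle/I$ denote the subalgebra of $\mathbb{K}\langle\alpha_2,\alpha_3\rangle/I$ generated by the class of $\alpha_2$. Then $$\{(\alpha_3\alpha_2)^n: n\ge0\}\cup\{(\alpha_3\alpha_2)^n\alpha_3: n\ge0\}\cup\{(\alpha_3\alpha_2)^n\alpha_2: n\ge1\}$$ (classes modulo $I$) is a system of generators for $\mathbb{K}\langle\alpha_2,\alpha_3\rangle/I$ as a free left $R$-module.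
   Context: $\mathbb{K}\langle\alpha_2,\alpha_3\rangle$ denotes the free (noncommutative) associative $\mathbb{K}$-algebra on $\alpha_2,\alpha_3$.
   Formalization: The field $\mathbb{K}$ has characteristic different from 2. The statement above fails without it. *)

theory Defs
  imports Main "HOL-Library.Poly_Mapping"
begin

text \<open>Free noncommutative associative algebra K<alpha2, alpha3> over a field:
  finitely supported K-valued functions on words in the two letters,
  with convolution product induced by concatenation of words.\<close>

datatype gen = A2 | A3

datatype word = Word "gen list"

instantiation word :: monoid_add
begin
definition zero_word :: word where "zero_word = Word []"
fun plus_word :: "word \<Rightarrow> word \<Rightarrow> word" where
  "plus_word (Word u) (Word v) = Word (u @ v)"
instance
proof
  fix a b c :: word
  show "a + b + c = a + (b + c)" by (cases a; cases b; cases c) simp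
  show "0 + a = a" by (cases a) (simp add: zero_word_def)
  show "a + 0 = a" by (cases a) (simp add: zero_word_def)
qed
end

type_synonym 'k ncpoly = "word \<Rightarrow>\<^sub>0 'k"

definition var :: "gen \<Rightarrow> 'k::ring_1 ncpoly" where
  "var g = Poly_Mapping.single (Word [g]) 1"

definition const :: "'k::ring_1 \<Rightarrow> 'k ncpoly" where
  "const c = Poly_Mapping.single 0 c"

inductive_set ideal_gen :: "'k::ring_1 ncpoly set \<Rightarrow> 'k ncpoly set" for G where
  zero: "0 \<in> ideal_gen G"
| gen: "g \<in> G \<Longrightarrow> a * g * b \<in> ideal_gen G"
| add: "x \<in> ideal_gen G \<Longrightarrow> y \<in> ideal_gen G \<Longrightarrow> x + y \<in> ideal_gen G"

inductive_set subalg_gen :: "'k::ring_1 ncpoly set \<Rightarrow> 'k ncpoly set" for S where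
  base: "s \<in> S \<Longrightarrow> s \<in> subalg_gen S"
| const: "const c \<in> subalg_gen S"
| add: "x \<in> subalg_gen S \<Longrightarrow> y \<in> subalg_gen S \<Longrightarrow> x + y \<in> subalg_gen S"
| mult: "x \<in> subalg_gen S \<Longrightarrow> y \<in> subalg_gen S \<Longrightarrow> x * y \<in> subalg_gen S"

definition I_rel :: "'k::ring_1 ncpoly set" where
  "I_rel = ideal_gen {var A2 ^ 3, var A3 ^ 2 - var A3,
      (var A3 * var A2) ^ 2 * var A3 - 4 * (var A3 * var A2 ^ 2 * var A3)}"

definition basis_idx :: "(nat \<times> nat) set" where
  "basis_idx = {(k, n). k = 0 \<or> k = 1 \<or> (k = 2 \<and> n \<ge> 1)}"

fun basis_elem :: "nat \<times> nat \<Rightarrow> 'k::ring_1 ncpoly" where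
  "basis_elem (k, n) =
     (if k = 0 then (var A3 * var A2) ^ n
      else if k = 1 then (var A3 * var A2) ^ n * var A3
      else (var A3 * var A2) ^ n * var A2)"

text \<open>Representatives (in the free algebra) of elements of R, the subalgebra of the
  quotient generated by the class of alpha2: R is the image of subalg_gen {alpha2}.\<close>
definition free_left_basis_mod ::
  "'k::ring_1 ncpoly set \<Rightarrow> 'k ncpoly set \<Rightarrow> 'i set \<Rightarrow> ('i \<Rightarrow> 'k ncpoly) \<Rightarrow> bool" where
  "free_left_basis_mod I Rrep J e \<longleftrightarrow>
     (\<forall>p. \<exists>F c. finite F \<and> F \<subseteq> J \<and> (\<forall>j\<in>F. c j \<in> Rrep) \<and>
                p - (\<Sum>j\<in>F. c j * e j) \<in> I) \<and>
     (\<forall>F c. finite F \<longrightarrow> F \<subseteq> J \<longrightarrow> (\<forall>j\<in>F. c j \<in> Rrep) \<longrightarrow>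
            (\<Sum>j\<in>F. c j * e j) \<in> I \<longrightarrow> (\<forall>j\<in>F. c j \<in> I))"

end

theory Submission
  imports Defs
begin

abbreviation keys where "keys \<equiv> Poly_Mapping.keys"
abbreviation lookup where "lookup \<equiv> Poly_Mapping.lookup"

type_synonym st = "nat \<times> nat \<times> nat"

fun stepS :: "gen \<Rightarrow> st \<Rightarrow> st" where
  "stepS A2 (i,k,n) = (if i < 2 then (Suc i,k,n) else (0,0,0))"
| "stepS A3 (i,k,n) = (if i = 0 then (if k = 0 \<and> n = 0 then (0,1,0) else (0,k,n))
    else if i = 1 then (0,k,Suc n)
    else if k = 0 \<and> n = 0 then (0,2,1) else (0,k,n+2))"

fun stepC :: "gen \<Rightarrow> st \<Rightarrow> 'k::field" where
  "stepC A2 (i,k,n) = (if i < 2 then 1 else 0)"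
| "stepC A3 (i,k,n) = (if 2 \<le> i \<and> \<not> (k = 0 \<and> n = 0) then inverse 4 else 1)"

primrec MS :: "gen list \<Rightarrow> st \<Rightarrow> st" where
  "MS [] s = s"
| "MS (x#u) s = stepS x (MS u s)"

primrec MC :: "gen list \<Rightarrow> st \<Rightarrow> 'k::field" where
  "MC [] s = 1"
| "MC (x#u) s = MC u s * stepC x (MS u s)"

lemma MS_append: "MS (u@v) s = MS u (MS v s)"
  by (induction u) simp_all

lemma MC_append: "MC (u@v) s = MC v s * MC u (MS v s)"
  by (induction u) (simp_all add: MS_append mult.assoc)

fun wl :: "word \<Rightarrow> gen list" where "wl (Word l) = l"

lemma wl_plus [simp]: "wl (u + v) = wl u @ wl v"
  by (cases u; cases v) simp

lemma wl_zero [simp]: "wl 0 = []"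
  by (simp add: zero_word_def)

lemma Word_wl [simp]: "Word (wl u) = u"
  by (cases u) simp

lemma Word_plus: "Word u + Word v = Word (u @ v)"
  by simp

lemma expand: "(p :: 'a \<Rightarrow>\<^sub>0 'b::comm_monoid_add) = (\<Sum>k\<in>keys p. Poly_Mapping.single k (lookup p k))"
proof (rule poly_mapping_eqI)
  fix x
  have "lookup (\<Sum>k\<in>keys p. Poly_Mapping.single k (lookup p k)) x
     = (\<Sum>k\<in>keys p. if k = x then lookup p k else 0)"
    by (simp add: lookup_sum lookup_single when_def)
  also have "\<dots> = lookup p x"
    by (simp add: sum.delta in_keys_iff)
  finally show "lookup p x = lookup (\<Sum>k\<in>keys p. Poly_Mapping.single k (lookup p k)) x" by simp
qed

lemma ideal_uminus: "x \<in> ideal_gen G \<Longrightarrow> - x \<in> ideal_gen G"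
proof (induction rule: ideal_gen.induct)
  case zero then show ?case by (simp add: ideal_gen.zero)
next
  case (gen g a b)
  have "- (a * g * b) = (- a) * g * b" by simp
  then show ?case using gen ideal_gen.gen by metis
next
  case (add x y) then show ?case using ideal_gen.add by (metis minus_add_distrib)
qed

lemma ideal_diff: "x \<in> ideal_gen G \<Longrightarrow> y \<in> ideal_gen G \<Longrightarrow> x - y \<in> ideal_gen G"
  using ideal_gen.add ideal_uminus by (metis diff_conv_add_uminus)

lemma ideal_lmult: "x \<in> ideal_gen G \<Longrightarrow> c * x \<in> ideal_gen G"
proof (induction rule: ideal_gen.induct)
  case zero then show ?case by (simp add: ideal_gen.zero)
next
  case (gen g a b)
  have "c * (a * g * b) = (c * a) * g * b" by (simp add: mult.assoc)
  then show ?case using gen ideal_gen.gen by metis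
next
  case (add x y) then show ?case using ideal_gen.add by (metis distrib_left)
qed

lemma ideal_rmult: "x \<in> ideal_gen G \<Longrightarrow> x * c \<in> ideal_gen G"
proof (induction rule: ideal_gen.induct)
  case zero then show ?case by (simp add: ideal_gen.zero)
next
  case (gen g a b)
  have "(a * g * b) * c = a * g * (b * c)" by (simp add: mult.assoc)
  then show ?case using gen ideal_gen.gen by metis
next
  case (add x y) then show ?case using ideal_gen.add by (metis distrib_right)
qed

lemma ideal_sum: "finite A \<Longrightarrow> (\<forall>i\<in>A. f i \<in> ideal_gen G) \<Longrightarrow> (\<Sum>i\<in>A. f i) \<in> ideal_gen G"
  by (induction A rule: finite_induct) (auto intro: ideal_gen.zero ideal_gen.add)

lemma ideal_gen1: "g \<in> G \<Longrightarrow> g \<in> ideal_gen G"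
  using ideal_gen.gen[of g G 1 1] by simp

definition s0 :: st where "s0 = (0,0,0)"

definition Phi :: "'k::field ncpoly \<Rightarrow> (st \<Rightarrow>\<^sub>0 'k)" where
  "Phi p = (\<Sum>w\<in>keys p. Poly_Mapping.single (MS (wl w) s0) (lookup p w * MC (wl w) s0))"

lemma Phi_add: "Phi (p + q) = Phi p + Phi q"
  unfolding Phi_def
  by (rule setsum_keys_plus_distrib) (simp_all add: distrib_right single_add)

lemma Phi_zero [simp]: "Phi 0 = 0"
  by (simp add: Phi_def)

lemma Phi_uminus: "Phi (- p) = - Phi p"
proof -
  have "Phi p + Phi (- p) = 0" using Phi_add[of p "- p"] by simp
  then show ?thesis by (metis neg_eq_iff_add_eq_0)
qed

lemma Phi_diff: "Phi (p - q) = Phi p - Phi q"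
  by (metis diff_conv_add_uminus Phi_add Phi_uminus)

lemma Phi_sum: "Phi (\<Sum>i\<in>A. f i) = (\<Sum>i\<in>A. Phi (f i))"
  by (induction A rule: infinite_finite_induct) (simp_all add: Phi_add)

lemma Phi_single: "Phi (Poly_Mapping.single w c) = Poly_Mapping.single (MS (wl w) s0) (c * MC (wl w) s0)"
  by (cases "c = 0") (simp_all add: Phi_def)

lemma single_mult_Word: "Poly_Mapping.single (Word u) (a::'k::ring_1) * Poly_Mapping.single (Word v) b
   = Poly_Mapping.single (Word (u @ v)) (a * b)"
  by (simp add: mult_single)

lemma var_pow: "(var x :: 'k::ring_1 ncpoly) ^ n = Poly_Mapping.single (Word (replicate n x)) 1"
proof (induction n)
  case 0 then show ?case by (simp add: zero_word_def[symmetric])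
next
  case (Suc n) then show ?case by (simp add: var_def single_mult_Word)
qed

lemma Phi_triple:
  "Phi (Poly_Mapping.single u (a::'k::field) * Poly_Mapping.single (Word W) c * Poly_Mapping.single w b)
   = Poly_Mapping.single (MS (wl u) (MS W (MS (wl w) s0)))
       (a * c * b * (MC (wl w) s0 * MC W (MS (wl w) s0) * MC (wl u) (MS W (MS (wl w) s0))))"
  by (simp add: mult_single Phi_single MS_append MC_append mult.assoc)

lemma R1: "(MC [A2,A2,A2] t :: 'k::field) = 0"
  by (cases t) auto

lemma R2S: "MS [A3,A3] t = MS [A3] t"
  by (cases t) auto

lemma R2C: "(MC [A3,A3] t :: 'k::field) = MC [A3] t"
  by (cases t) auto

lemma R3S: "MS [A3,A2,A3,A2,A3] t = MS [A3,A2,A2,A3] t"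
  by (cases t) auto

lemma R3C: assumes "(2::'k::field) \<noteq> 0"
  shows "(MC [A3,A2,A3,A2,A3] t :: 'k) = 4 * MC [A3,A2,A2,A3] t"
proof -
  have "(4::'k) \<noteq> 0" using assms by (metis mult_2 mult_eq_0_iff numeral_Bit0 one_add_one)
  then show ?thesis by (cases t) auto
qed

lemma gens_eq:
  "(var A2 ^ 3 :: 'k::ring_1 ncpoly) = Poly_Mapping.single (Word [A2,A2,A2]) 1"
  "(var A3 ^ 2 - var A3 :: 'k::ring_1 ncpoly) = Poly_Mapping.single (Word [A3,A3]) 1 - Poly_Mapping.single (Word [A3]) 1"
  "((var A3 * var A2) ^ 2 * var A3 - 4 * (var A3 * var A2 ^ 2 * var A3) :: 'k::ring_1 ncpoly)
     = Poly_Mapping.single (Word [A3,A2,A3,A2,A3]) 1 - Poly_Mapping.single (Word [A3,A2,A2,A3]) 4"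
proof -
  show "(var A2 ^ 3 :: 'k::ring_1 ncpoly) = Poly_Mapping.single (Word [A2,A2,A2]) 1"
    by (simp add: numeral_3_eq_3 var_def single_mult_Word)
  show "(var A3 ^ 2 - var A3 :: 'k::ring_1 ncpoly) = Poly_Mapping.single (Word [A3,A3]) 1 - Poly_Mapping.single (Word [A3]) 1"
    by (simp add: numeral_2_eq_2 var_def single_mult_Word)
  have 4: "(4 :: 'k ncpoly) = Poly_Mapping.single (Word []) 4"
    by (simp add: zero_word_def[symmetric])
  show "((var A3 * var A2) ^ 2 * var A3 - 4 * (var A3 * var A2 ^ 2 * var A3) :: 'k::ring_1 ncpoly)
     = Poly_Mapping.single (Word [A3,A2,A3,A2,A3]) 1 - Poly_Mapping.single (Word [A3,A2,A2,A3]) 4"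
    unfolding 4 by (simp add: var_pow numeral_2_eq_2 var_def single_mult_Word power2_eq_square)
qed

definition Gset :: "'k::ring_1 ncpoly set" where
  "Gset = {var A2 ^ 3, var A3 ^ 2 - var A3,
      (var A3 * var A2) ^ 2 * var A3 - 4 * (var A3 * var A2 ^ 2 * var A3)}"

lemma I_rel_Gset: "I_rel = ideal_gen Gset"
  by (simp add: I_rel_def Gset_def)

lemma Phi_rel:
  assumes two: "(2::'k::field) \<noteq> 0" and g: "g \<in> (Gset :: 'k ncpoly set)"
  shows "Phi (Poly_Mapping.single u a * g * Poly_Mapping.single w b) = 0"
proof -
  let ?su = "Poly_Mapping.single u a" and ?sw = "Poly_Mapping.single w b"
  consider "g = Poly_Mapping.single (Word [A2,A2,A2]) 1"
    | "g = Poly_Mapping.single (Word [A3,A3]) 1 - Poly_Mapping.single (Word [A3]) 1"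
    | "g = Poly_Mapping.single (Word [A3,A2,A3,A2,A3]) 1 - Poly_Mapping.single (Word [A3,A2,A2,A3]) 4"
    using g unfolding Gset_def gens_eq by blast
  then show ?thesis
  proof cases
    case 1
    show ?thesis unfolding 1 Phi_triple R1 by simp
  next
    case 2
    have "?su * g * ?sw = ?su * Poly_Mapping.single (Word [A3,A3]) 1 * ?sw - ?su * Poly_Mapping.single (Word [A3]) 1 * ?sw"
      unfolding 2 by (simp add: algebra_simps)
    then have "Phi (?su * g * ?sw) = Phi (?su * Poly_Mapping.single (Word [A3,A3]) 1 * ?sw) - Phi (?su * Poly_Mapping.single (Word [A3]) 1 * ?sw)"
      by (simp add: Phi_diff)
    also have "\<dots> = 0" unfolding Phi_triple R2S R2C by simp
    finally show ?thesis .
  next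
    case 3
    have "?su * g * ?sw = ?su * Poly_Mapping.single (Word [A3,A2,A3,A2,A3]) 1 * ?sw - ?su * Poly_Mapping.single (Word [A3,A2,A2,A3]) 4 * ?sw"
      unfolding 3 by (simp add: algebra_simps)
    then have "Phi (?su * g * ?sw) = Phi (?su * Poly_Mapping.single (Word [A3,A2,A3,A2,A3]) 1 * ?sw) - Phi (?su * Poly_Mapping.single (Word [A3,A2,A2,A3]) 4 * ?sw)"
      by (simp add: Phi_diff)
    also have "\<dots> = 0" unfolding Phi_triple R3S R3C[OF two] by (simp add: ac_simps)
    finally show ?thesis .
  qed
qed

lemma expand_prod3:
  "x * g * y = (\<Sum>u\<in>keys x. \<Sum>w\<in>keys y.
      Poly_Mapping.single u (lookup x u) * g * Poly_Mapping.single w (lookup y w))"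
proof -
  have "x * g * y = (\<Sum>u\<in>keys x. Poly_Mapping.single u (lookup x u)) * g * (\<Sum>w\<in>keys y. Poly_Mapping.single w (lookup y w))"
    by (simp only: expand[symmetric])
  also have "\<dots> = (\<Sum>u\<in>keys x. \<Sum>w\<in>keys y.
      Poly_Mapping.single u (lookup x u) * g * Poly_Mapping.single w (lookup y w))"
    by (simp add: sum_distrib_left sum_distrib_right) (rule sum.swap)
  finally show ?thesis .
qed

lemma Phi_ideal:
  assumes two: "(2::'k::field) \<noteq> 0" and p: "p \<in> (I_rel :: 'k ncpoly set)"
  shows "Phi p = 0"
  using p unfolding I_rel_Gset
proof (induction rule: ideal_gen.induct)
  case zero then show ?case by simp
next
  case (gen g x y)
  show ?case unfolding expand_prod3[of x g y] Phi_sum using Phi_rel[OF two gen] by simp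
next
  case (add x y) then show ?case by (simp add: Phi_add)
qed

section \<open>Independence\<close>

fun bl :: "nat \<times> nat \<Rightarrow> gen list" where
  "bl (k,n) = (if k = 0 then concat (replicate n [A3,A2])
     else if k = 1 then concat (replicate n [A3,A2]) @ [A3]
     else concat (replicate (n - 1) [A3,A2]) @ [A3,A2,A2])"

lemma B_pow: "((var A3 * var A2) ^ n :: 'k::ring_1 ncpoly) = Poly_Mapping.single (Word (concat (replicate n [A3,A2]))) 1"
proof (induction n)
  case 0 then show ?case by (simp add: zero_word_def[symmetric])
next
  case (Suc n) then show ?case by (simp add: var_def single_mult_Word)
qed

lemma basis_single:
  assumes "j \<in> basis_idx"
  shows "(basis_elem j :: 'k::ring_1 ncpoly) = Poly_Mapping.single (Word (bl j)) 1"
proof -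
  obtain k n where j: "j = (k,n)" by (cases j)
  consider "k = 0" | "k = 1" | "k = 2" "n \<ge> 1" using assms j by (auto simp: basis_idx_def)
  then show ?thesis
  proof cases
    case 3
    then obtain m where n: "n = Suc m" by (cases n) auto
    have "(basis_elem j :: 'k ncpoly) = (var A3 * var A2) ^ m * (var A3 * var A2 * var A2)"
      using 3 j n by (simp del: power_Suc add: power_Suc2 mult.assoc)
    also have "\<dots> = Poly_Mapping.single (Word (bl j)) 1"
      by (simp only: B_pow) (simp add: var_def single_mult_Word 3 j n)
    finally show ?thesis .
  next
    case 1
    have "(basis_elem j :: 'k ncpoly) = (var A3 * var A2) ^ n" using 1 j by simp
    also have "\<dots> = Poly_Mapping.single (Word (bl j)) 1"
      by (simp only: B_pow) (simp add: 1 j)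
    finally show ?thesis .
  next
    case 2
    have "(basis_elem j :: 'k ncpoly) = (var A3 * var A2) ^ n * var A3" using 2 j by simp
    also have "\<dots> = Poly_Mapping.single (Word (bl j)) 1"
      by (simp only: B_pow) (simp add: 2 j var_def single_mult_Word)
    finally show ?thesis .
  qed
qed

lemma MS_BA: "MS (concat (replicate n [A3,A2])) (0,k,m) = (0,k,m+n)"
  by (induction n) (simp_all add: MS_append)

lemma MC_BA: "(MC (concat (replicate n [A3,A2])) (0,k,m) :: 'k::field) = 1"
  by (induction n) (simp_all add: MS_append MC_append MS_BA)

lemma M_bl:
  assumes "j \<in> basis_idx"
  shows "MS (bl j) s0 = (0, j)" "(MC (bl j) s0 :: 'k::field) = 1"
proof -
  obtain k n where j: "j = (k,n)" by (cases j)
  consider "k = 0" | "k = 1" | "k = 2" "n \<ge> 1" using assms j by (auto simp: basis_idx_def)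
  then have "MS (bl j) s0 = (0, j) \<and> (MC (bl j) s0 :: 'k::field) = 1"
  proof cases
    case 3
    then show ?thesis using j by (simp add: MS_append MC_append MS_BA MC_BA s0_def)
  qed (simp_all add: j MS_append MC_append MS_BA MC_BA s0_def)
  then show "MS (bl j) s0 = (0, j)" "(MC (bl j) s0 :: 'k::field) = 1" by auto
qed

lemma M_rep:
  "(MC (replicate m A2) (0,k,n) :: 'k::field) = (if m \<le> 2 then 1 else 0) \<and>
   (m \<le> 2 \<longrightarrow> MS (replicate m A2) (0,k,n) = (m,k,n))"
proof (induction m)
  case 0 then show ?case by simp
next
  case (Suc m)
  consider "m < 2" | "m = 2" | "m > 2" by linarith
  then show ?case
  proof cases
    case 1
    then have "(MC (replicate m A2) (0,k,n) :: 'k) = 1" "MS (replicate m A2) (0,k,n) = (m,k,n)"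
      using Suc by auto
    then show ?thesis using 1 by simp
  next
    case 2
    then have e: "MS (replicate m A2) (0,k,n) = (m,k,n)" using Suc by auto
    have "(MC (replicate (Suc m) A2) (0,k,n) :: 'k) = MC (replicate m A2) (0,k,n) * stepC A2 (MS (replicate m A2) (0,k,n))"
      by simp
    also have "\<dots> = 0" unfolding e using 2 by simp
    finally show ?thesis using 2 by simp
  next
    case 3
    then have "(MC (replicate m A2) (0,k,n) :: 'k) = 0" using Suc by auto
    then show ?thesis using 3 by simp
  qed
qed

lemma subalg_keys:
  "c \<in> subalg_gen {var A2 :: 'k::ring_1 ncpoly} \<Longrightarrow> keys c \<subseteq> range (\<lambda>m. Word (replicate m A2))"
proof (induction rule: subalg_gen.induct)
  case (base s)
  then have "s = Poly_Mapping.single (Word [A2]) 1" by (simp add: var_def)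
  then have "keys s = {Word [A2]}" by simp
  moreover have "Word [A2] \<in> range (\<lambda>m. Word (replicate m A2))"
    using rangeI[of "\<lambda>m. Word (replicate m A2)" 1] by simp
  ultimately show ?case by simp
next
  case (const c)
  have "keys (const c :: 'k ncpoly) \<subseteq> {Word (replicate 0 A2)}"
    by (simp add: const_def zero_word_def)
  then show ?case by auto
next
  case (add x y)
  then show ?case using keys_add[of x y] by blast
next
  case (mult x y)
  have "keys (x * y) \<subseteq> {a + b |a b. a \<in> keys x \<and> b \<in> keys y}" by (rule keys_mult)
  also have "\<dots> \<subseteq> range (\<lambda>m. Word (replicate m A2))"
  proof
    fix z assume "z \<in> {a + b |a b. a \<in> keys x \<and> b \<in> keys y}"
    then obtain a b where "z = a + b" "a \<in> keys x" "b \<in> keys y" by blast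
    with mult.IH obtain m1 m2 where "a = Word (replicate m1 A2)" "b = Word (replicate m2 A2)" by blast
    then have "z = Word (replicate (m1 + m2) A2)" using \<open>z = a + b\<close> by (simp add: replicate_add)
    then show "z \<in> range (\<lambda>m. Word (replicate m A2))" by blast
  qed
  finally show ?case .
qed

lemma lookup_Phi_basis:
  assumes j: "j \<in> basis_idx" and c: "c \<in> subalg_gen {var A2 :: 'k::field ncpoly}" and m0: "m0 \<le> 2"
  shows "lookup (Phi (c * basis_elem j)) (m0, j0) = (if j = j0 then lookup c (Word (replicate m0 A2)) else 0)"
proof -
  have "c * basis_elem j = (\<Sum>k\<in>keys c. Poly_Mapping.single k (lookup c k)) * Poly_Mapping.single (Word (bl j)) 1"
    by (simp only: expand[symmetric] basis_single[OF j])
  also have "\<dots> = (\<Sum>k\<in>keys c. Poly_Mapping.single (k + Word (bl j)) (lookup c k))"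
    by (simp add: sum_distrib_right mult_single)
  finally have "lookup (Phi (c * basis_elem j)) (m0, j0) =
     (\<Sum>k\<in>keys c. lookup c k * MC (wl k @ bl j) s0 when MS (wl k @ bl j) s0 = (m0, j0))"
    by (simp add: Phi_sum Phi_single lookup_sum lookup_single)
  also have "\<dots> = (\<Sum>k\<in>keys c. if k = Word (replicate m0 A2) \<and> j = j0 then lookup c k else 0)"
  proof (rule sum.cong)
    fix k assume "k \<in> keys c"
    with subalg_keys[OF c] obtain m where k: "k = Word (replicate m A2)" by blast
    have e1: "MS (wl k @ bl j) s0 = MS (replicate m A2) (0, j)"
      by (simp add: k MS_append M_bl[OF j])
    have e2: "(MC (wl k @ bl j) s0 :: 'k) = MC (replicate m A2) (0, j)"
      by (simp add: k MC_append M_bl[OF j] MS_append)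
    obtain kk nn where jj: "j = (kk, nn)" by (cases j)
    show "(lookup c k * MC (wl k @ bl j) s0 when MS (wl k @ bl j) s0 = (m0, j0)) =
          (if k = Word (replicate m0 A2) \<and> j = j0 then lookup c k else 0)"
    proof -
      have M1: "(MC (replicate m A2) (0,kk,nn) :: 'k) = (if m \<le> 2 then 1 else 0)"
        using M_rep[of m kk nn, where 'k='k] by blast
      have M2: "m \<le> 2 \<Longrightarrow> MS (replicate m A2) (0,kk,nn) = (m,kk,nn)"
        using M_rep[of m kk nn, where 'k='k] by blast
      have keq: "(k = Word (replicate m0 A2)) = (m = m0)" by (simp add: k)
      show ?thesis unfolding e1 e2 keq unfolding jj
        using m0 M1 M2 by (cases "m \<le> 2") (auto simp: when_def)
    qed
  qed simp
  also have "\<dots> = (if j = j0 then lookup c (Word (replicate m0 A2)) else 0)"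
    by (auto simp: sum.delta in_keys_iff)
  finally show ?thesis .
qed

lemma indep:
  assumes two: "(2::'k::field) \<noteq> 0"
    and F: "finite F" "F \<subseteq> basis_idx" and c: "\<forall>j\<in>F. c j \<in> subalg_gen {var A2 :: 'k ncpoly}"
    and P: "(\<Sum>j\<in>F. c j * basis_elem j) \<in> (I_rel :: 'k ncpoly set)"
    and j0: "j0 \<in> F"
  shows "c j0 \<in> I_rel"
proof -
  have z: "lookup (c j0) (Word (replicate m A2)) = 0" if m: "m \<le> 2" for m
  proof -
    have "0 = lookup (Phi (\<Sum>j\<in>F. c j * basis_elem j)) (m, j0)"
      using Phi_ideal[OF two P] by simp
    also have "\<dots> = (\<Sum>j\<in>F. lookup (Phi (c j * basis_elem j)) (m, j0))"
      by (simp add: Phi_sum lookup_sum)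
    also have "\<dots> = (\<Sum>j\<in>F. if j = j0 then lookup (c j) (Word (replicate m A2)) else 0)"
    proof (rule sum.cong[OF refl])
      fix j assume "j \<in> F"
      then have "j \<in> basis_idx" "c j \<in> subalg_gen {var A2}" using F c by auto
      from lookup_Phi_basis[OF this m]
      show "lookup (Phi (c j * basis_elem j)) (m, j0) = (if j = j0 then lookup (c j) (Word (replicate m A2)) else 0)" .
    qed
    also have "\<dots> = lookup (c j0) (Word (replicate m A2))"
      using F j0 by (simp add: sum.delta)
    finally show ?thesis by simp
  qed
  have "c j0 = (\<Sum>k\<in>keys (c j0). Poly_Mapping.single k (lookup (c j0) k))" by (rule expand)
  also have "\<dots> \<in> I_rel" unfolding I_rel_Gset
  proof (rule ideal_sum, simp, intro ballI)
    fix k assume k: "k \<in> keys (c j0)"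
    with subalg_keys c j0 obtain m where km: "k = Word (replicate m A2)" by blast
    have "m \<ge> 3"
    proof (rule ccontr)
      assume "\<not> 3 \<le> m"
      then have "m \<le> 2" by simp
      then have "lookup (c j0) k = 0" using z km by simp
      then show False using k by (simp add: in_keys_iff)
    qed
    then have "replicate m A2 = replicate (m - 3) A2 @ replicate 3 A2"
      by (simp add: replicate_add[symmetric])
    then have r: "replicate m A2 = replicate (m - 3) A2 @ [A2,A2,A2]"
      by (simp add: numeral_3_eq_3)
    have eq: "Poly_Mapping.single k (lookup (c j0) k) =
        Poly_Mapping.single (Word (replicate (m - 3) A2)) (lookup (c j0) k) * var A2 ^ 3 * 1"
      unfolding gens_eq(1) km r by (simp add: single_mult_Word)
    have g: "var A2 ^ 3 \<in> (Gset :: 'k ncpoly set)" by (simp add: Gset_def)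
    show "Poly_Mapping.single k (lookup (c j0) k) \<in> ideal_gen Gset"
      unfolding eq by (rule ideal_gen.gen[OF g])
  qed
  finally show ?thesis .
qed

section \<open>Spanning\<close>

lemma const_comm: "const (c::'k::field) * p = p * const c"
proof -
  have "const c * p = const c * (\<Sum>k\<in>keys p. Poly_Mapping.single k (lookup p k))"
    by (simp only: expand[symmetric])
  also have "\<dots> = (\<Sum>k\<in>keys p. Poly_Mapping.single k (lookup p k)) * const c"
    by (simp add: sum_distrib_left sum_distrib_right const_def mult_single mult.commute)
  also have "\<dots> = p * const c" by (simp only: expand[symmetric])
  finally show ?thesis .
qed

lemma const_mult: "const (c::'k::ring_1) * const d = const (c * d)"
  by (simp add: const_def mult_single)

lemma const_one: "const (1::'k::ring_1) = 1"
  by (simp add: const_def)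

lemma const_zero: "const (0::'k::ring_1) = 0"
  by (simp add: const_def)

lemma const_four: "const (4::'k::ring_1) = 4"
  by (simp add: const_def)

definition nf :: "st \<Rightarrow> 'k::ring_1 ncpoly" where
  "nf s = (case s of (i,k,n) \<Rightarrow> var A2 ^ i * basis_elem (k,n))"

definition valid :: "st \<Rightarrow> bool" where
  "valid s = (case s of (i,k,n) \<Rightarrow> i \<le> 2 \<and> (k,n) \<in> basis_idx)"

lemma e_starts_b:
  assumes "(k,n) \<in> basis_idx" "(k,n) \<noteq> (0,0)"
  shows "\<exists>X. (basis_elem (k,n) :: 'k::ring_1 ncpoly) = var A3 * X"
proof -
  consider "k = 0" "n \<ge> 1" | "k = 1" | "k = 2" "n \<ge> 1" using assms by (auto simp: basis_idx_def)
  then show ?thesis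
  proof cases
    case 1
    then obtain m where "n = Suc m" by (cases n) auto
    then show ?thesis using 1 by (auto simp: mult.assoc)
  next
    case 2
    show ?thesis
    proof (cases n)
      case 0 then show ?thesis using 2 by (auto intro: exI[of _ 1])
    next
      case (Suc m) then show ?thesis using 2 by (auto simp: mult.assoc)
    qed
  next
    case 3
    then obtain m where "n = Suc m" by (cases n) auto
    then show ?thesis using 3 by (auto simp: mult.assoc)
  qed
qed

lemma e_shift2: "(basis_elem (k, n + 2) :: 'k::ring_1 ncpoly) = (var A3 * var A2) * (var A3 * var A2) * basis_elem (k,n)"
  by (simp add: numeral_2_eq_2 mult.assoc)

lemma e_shift1: "(basis_elem (k, Suc n) :: 'k::ring_1 ncpoly) = (var A3 * var A2) * basis_elem (k,n)"
  by (simp add: mult.assoc)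

lemma step_valid: "valid s \<Longrightarrow> valid (stepS x s)"
  by (cases x; cases s) (auto simp: valid_def basis_idx_def)

lemma in_I_gen: "g \<in> (Gset :: 'k::ring_1 ncpoly set) \<Longrightarrow> a * g * b \<in> I_rel"
  unfolding I_rel_Gset by (rule ideal_gen.gen)

lemma step_cong:
  assumes two: "(2::'k::field) \<noteq> 0" and v: "valid s"
  shows "var x * nf s - const (stepC x s) * nf (stepS x s) \<in> (I_rel :: 'k ncpoly set)"
proof -
  obtain i k n where s: "s = (i,k,n)" by (cases s)
  have kn: "(k,n) \<in> basis_idx" and i2: "i \<le> 2" using v s by (auto simp: valid_def)
  let ?a = "var A2 :: 'k ncpoly" and ?b = "var A3 :: 'k ncpoly"
  let ?e = "basis_elem (k,n) :: 'k ncpoly"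
  have z: "(0::'k ncpoly) \<in> I_rel" by (simp add: I_rel_Gset ideal_gen.zero)
  show ?thesis
  proof (cases x)
    case A2
    show ?thesis
    proof (cases "i < 2")
      case True
      then show ?thesis using z by (simp add: A2 s nf_def const_one mult.assoc)
    next
      case False
      then have i: "i = 2" using i2 by simp
      have "?a * (?a ^ 2 * ?e) = 1 * ?a ^ 3 * ?e"
        by (simp add: numeral_3_eq_3 numeral_2_eq_2 mult.assoc)
      moreover have "1 * ?a ^ 3 * ?e \<in> I_rel" by (rule in_I_gen) (simp add: Gset_def)
      ultimately show ?thesis by (simp add: A2 s i nf_def const_zero)
    qed
  next
    case A3
    consider "i = 0" | "i = 1" | "i = 2" using i2 by linarith
    then show ?thesis
    proof cases
      case 1
      show ?thesis
      proof (cases "k = 0 \<and> n = 0")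
        case True then show ?thesis using z by (simp add: A3 s 1 nf_def const_one)
      next
        case False
        then obtain X where X: "?e = ?b * X" using e_starts_b[OF kn] by auto
        have "1 * (?b ^ 2 - ?b) * X \<in> I_rel" by (rule in_I_gen) (simp add: Gset_def)
        moreover have "1 * (?b ^ 2 - ?b) * X = ?b * (?b * X) - ?b * X"
          by (simp add: power2_eq_square algebra_simps)
        then have "1 * (?b ^ 2 - ?b) * X = ?b * ?e - ?e" by (simp only: X)
        ultimately show ?thesis using False z by (simp add: A3 s 1 nf_def const_one)
      qed
    next
      case 2
      show ?thesis using z by (simp add: A3 s 2 nf_def const_one e_shift1 mult.assoc)
    next
      case 3
      show ?thesis
      proof (cases "k = 0 \<and> n = 0")
        case True then show ?thesis using z
          by (simp add: A3 s 3 nf_def const_one numeral_2_eq_2 mult.assoc)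
      next
        case False
        then obtain X where X: "?e = ?b * X" using e_starts_b[OF kn] by auto
        have four: "(4::'k) \<noteq> 0" using two by (metis mult_2 mult_eq_0_iff numeral_Bit0 one_add_one)
        let ?q = "const (inverse 4) :: 'k ncpoly"
        have q4: "?q * (4 * Y) = Y" for Y
        proof -
          have "?q * (4 * Y) = (?q * const 4) * Y" by (simp add: const_four mult.assoc)
          also have "\<dots> = Y" using four by (simp add: const_mult const_one)
          finally show ?thesis .
        qed
        let ?r = "(?b * ?a) ^ 2 * ?b - 4 * (?b * ?a ^ 2 * ?b)"
        have "?q * ?r * X \<in> I_rel" by (rule in_I_gen) (simp add: Gset_def)
        then have "- (?q * ?r * X) \<in> I_rel" unfolding I_rel_Gset by (rule ideal_uminus)
        moreover have "- (?q * ?r * X) = ?b * (?a ^ 2 * ?e) - ?q * (1 * ((?b * ?a) * (?b * ?a) * ?e))"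
        proof -
          have "?q * ?r * X = ?q * ((?b * ?a) ^ 2 * ?b * X) - ?q * (4 * (?b * ?a ^ 2 * ?b * X))"
            by (simp add: algebra_simps)
          also have "\<dots> = ?q * ((?b * ?a) * (?b * ?a) * (?b * X)) - ?b * (?a ^ 2 * (?b * X))"
            unfolding q4 by (simp add: power2_eq_square mult.assoc)
          also have "\<dots> = ?q * ((?b * ?a) * (?b * ?a) * ?e) - ?b * (?a ^ 2 * ?e)"
            by (simp only: X)
          finally show ?thesis by simp
        qed
        moreover have st1: "stepS A3 s = (0,k,n+2)" using False by (simp add: s 3)
        moreover have st2: "(stepC A3 s :: 'k) = inverse 4" using False by (simp add: s 3)
        moreover have nf1: "(nf (0,k,n+2) :: 'k ncpoly) = 1 * ((?b * ?a) * (?b * ?a) * ?e)"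
          by (simp only: nf_def prod.case power_0 e_shift2)
        moreover have nf2: "(nf s :: 'k ncpoly) = ?a ^ 2 * ?e" by (simp only: s 3 nf_def prod.case)
        ultimately show ?thesis unfolding A3 by metis
      qed
    qed
  qed
qed

lemma word_cong:
  assumes two: "(2::'k::field) \<noteq> 0"
  shows "Poly_Mapping.single (Word l) 1 - const (MC l s0) * nf (MS l s0) \<in> (I_rel :: 'k ncpoly set)
         \<and> valid (MS l s0)"
proof (induction l)
  case Nil
  have "Poly_Mapping.single (Word []) (1::'k) = 1" by (simp add: zero_word_def[symmetric])
  moreover have "(nf s0 :: 'k ncpoly) = 1" by (simp add: nf_def s0_def)
  moreover have "valid s0" by (simp add: valid_def s0_def basis_idx_def)
  ultimately show ?case by (simp add: const_one I_rel_Gset ideal_gen.zero)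
next
  case (Cons x l)
  let ?W = "Poly_Mapping.single (Word l) 1 :: 'k ncpoly"
  let ?c = "MC l s0 :: 'k" and ?s = "MS l s0"
  let ?d = "stepC x ?s :: 'k" and ?t = "stepS x ?s"
  have h1: "?W - const ?c * nf ?s \<in> I_rel" and v: "valid ?s" using Cons by auto
  have h2: "var x * nf ?s - const ?d * nf ?t \<in> (I_rel :: 'k ncpoly set)" by (rule step_cong[OF two v])
  have w: "Poly_Mapping.single (Word (x # l)) (1::'k) = var x * ?W"
    by (simp add: var_def single_mult_Word)
  have "var x * ?W - const (?c * ?d) * nf ?t
      = var x * (?W - const ?c * nf ?s) + const ?c * (var x * nf ?s - const ?d * nf ?t)"
  proof -
    have "var x * (const ?c * nf ?s) = const ?c * (var x * nf ?s)"
      by (metis const_comm mult.assoc)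
    then show ?thesis by (simp add: algebra_simps const_mult[symmetric])
  qed
  moreover have "\<dots> \<in> I_rel" using h1 h2 unfolding I_rel_Gset
    by (intro ideal_gen.add ideal_lmult)
  ultimately have "Poly_Mapping.single (Word (x # l)) (1::'k) - const (MC (x # l) s0) * nf (MS (x # l) s0) \<in> I_rel"
    using w by simp
  moreover have "valid (MS (x # l) s0)" using step_valid[OF v] by simp
  ultimately show ?case by blast
qed

definition SP :: "'k::field ncpoly \<Rightarrow> bool" where
  "SP p \<longleftrightarrow> (\<exists>F c. finite F \<and> F \<subseteq> basis_idx \<and> (\<forall>j\<in>F. c j \<in> subalg_gen {var A2}) \<and>
                p - (\<Sum>j\<in>F. c j * basis_elem j) \<in> I_rel)"

lemma SP_zero: "SP 0"
  unfolding SP_def by (rule exI[of _ "{}"]) (simp add: I_rel_Gset ideal_gen.zero)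

lemma zero_subalg: "0 \<in> subalg_gen S"
  using subalg_gen.const[of 0 S] by (simp add: const_zero)

lemma SP_add:
  assumes "SP p" "SP q" shows "SP (p + q)"
proof -
  obtain F1 c1 where 1: "finite F1" "F1 \<subseteq> basis_idx" "\<forall>j\<in>F1. c1 j \<in> subalg_gen {var A2}"
      "p - (\<Sum>j\<in>F1. c1 j * basis_elem j) \<in> I_rel" using assms(1) unfolding SP_def by blast
  obtain F2 c2 where 2: "finite F2" "F2 \<subseteq> basis_idx" "\<forall>j\<in>F2. c2 j \<in> subalg_gen {var A2}"
      "q - (\<Sum>j\<in>F2. c2 j * basis_elem j) \<in> I_rel" using assms(2) unfolding SP_def by blast
  define c where "c j = (if j \<in> F1 then c1 j else 0) + (if j \<in> F2 then c2 j else 0)" for j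
  have fin: "finite (F1 \<union> F2)" using 1 2 by simp
  have "(\<Sum>j\<in>F1 \<union> F2. c j * basis_elem j)
     = (\<Sum>j\<in>F1 \<union> F2. if j \<in> F1 then c1 j * basis_elem j else 0)
     + (\<Sum>j\<in>F1 \<union> F2. if j \<in> F2 then c2 j * basis_elem j else 0)"
    unfolding sum.distrib[symmetric] by (rule sum.cong) (auto simp: c_def distrib_right)
  also have "\<dots> = (\<Sum>j\<in>F1. c1 j * basis_elem j) + (\<Sum>j\<in>F2. c2 j * basis_elem j)"
    using sum.inter_restrict[OF fin, of "\<lambda>j. c1 j * basis_elem j" F1, symmetric]
      sum.inter_restrict[OF fin, of "\<lambda>j. c2 j * basis_elem j" F2, symmetric]
    by (simp add: Int_absorb1 Int_absorb2)
  finally have eq: "(\<Sum>j\<in>F1 \<union> F2. c j * basis_elem j) = (\<Sum>j\<in>F1. c1 j * basis_elem j) + (\<Sum>j\<in>F2. c2 j * basis_elem j)" .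
  have eq2: "p + q - (\<Sum>j\<in>F1 \<union> F2. c j * basis_elem j)
      = (p - (\<Sum>j\<in>F1. c1 j * basis_elem j)) + (q - (\<Sum>j\<in>F2. c2 j * basis_elem j))"
    unfolding eq by (simp add: algebra_simps)
  have "(p - (\<Sum>j\<in>F1. c1 j * basis_elem j)) + (q - (\<Sum>j\<in>F2. c2 j * basis_elem j)) \<in> I_rel"
    using 1(4) 2(4) unfolding I_rel_Gset by (rule ideal_gen.add)
  then have mem: "p + q - (\<Sum>j\<in>F1 \<union> F2. c j * basis_elem j) \<in> I_rel" unfolding eq2 .
  moreover have "\<forall>j\<in>F1 \<union> F2. c j \<in> subalg_gen {var A2}"
    using 1(3) 2(3) by (auto simp: c_def intro: subalg_gen.add zero_subalg)
  ultimately show ?thesis unfolding SP_def using fin 1(2) 2(2)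
    by (intro exI[of _ "F1 \<union> F2"] exI[of _ c]) auto
qed

lemma pow_subalg: "var A2 ^ i \<in> subalg_gen {var A2 :: 'k::ring_1 ncpoly}"
proof (induction i)
  case 0 then show ?case using subalg_gen.const[of 1] by (simp add: const_one)
next
  case (Suc i) then show ?case by (simp add: subalg_gen.mult subalg_gen.base)
qed

lemma SP_single:
  assumes two: "(2::'k::field) \<noteq> 0"
  shows "SP (Poly_Mapping.single w (g::'k))"
proof -
  obtain l where w: "w = Word l" by (cases w)
  obtain i k n where s: "MS l s0 = (i,k,n)" by (cases "MS l s0")
  have h: "Poly_Mapping.single (Word l) 1 - const (MC l s0) * nf (MS l s0) \<in> (I_rel :: 'k ncpoly set)"
    and v: "valid (MS l s0)" using word_cong[OF two, of l] by auto
  have kn: "(k,n) \<in> basis_idx" using v s by (simp add: valid_def)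
  define cc where "cc = const (g * MC l s0) * var A2 ^ i"
  have "Poly_Mapping.single w g - (\<Sum>j\<in>{(k,n)}. (\<lambda>_. cc) j * basis_elem j)
      = const g * (Poly_Mapping.single (Word l) 1 - const (MC l s0) * nf (MS l s0))"
    by (simp add: w s cc_def nf_def const_mult[symmetric] algebra_simps const_def mult_single
        del: basis_elem.simps) (simp add: mult_single flip: mult.assoc)
  moreover have "\<dots> \<in> I_rel" using h unfolding I_rel_Gset by (rule ideal_lmult)
  moreover have "cc \<in> subalg_gen {var A2}" unfolding cc_def
    by (intro subalg_gen.mult subalg_gen.const pow_subalg)
  ultimately show ?thesis unfolding SP_def using kn
    by (intro exI[of _ "{(k,n)}"] exI[of _ "\<lambda>_. cc"]) auto
qed

lemma SP_sum:
  assumes "finite A" "\<forall>x\<in>A. SP (f x)" shows "SP (\<Sum>x\<in>A. f x)"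
  using assms by (induction A rule: finite_induct) (auto simp: SP_zero SP_add)

lemma SP_all:
  assumes two: "(2::'k::field) \<noteq> 0"
  shows "SP (p :: 'k ncpoly)"
proof -
  have "SP (\<Sum>w\<in>keys p. Poly_Mapping.single w (lookup p w))"
    by (rule SP_sum) (simp_all add: SP_single[OF two])
  then show ?thesis by (simp only: expand[symmetric])
qed

theorem lemma3:
  fixes dummy :: "'k::field"
  assumes "(2::'k) \<noteq> 0"
  shows "free_left_basis_mod (I_rel :: 'k ncpoly set) (subalg_gen {var A2}) basis_idx basis_elem"
  unfolding free_left_basis_mod_def
proof (intro conjI allI impI ballI)
  fix p :: "'k ncpoly"
  show "\<exists>F c. finite F \<and> F \<subseteq> basis_idx \<and> (\<forall>j\<in>F. c j \<in> subalg_gen {var A2}) \<and>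
                p - (\<Sum>j\<in>F. c j * basis_elem j) \<in> I_rel"
    using SP_all[OF assms, of p] unfolding SP_def .
next
  fix F :: "(nat \<times> nat) set" and c j
  assume "finite F" "F \<subseteq> basis_idx" "\<forall>j\<in>F. c j \<in> subalg_gen {var A2 :: 'k ncpoly}"
    "(\<Sum>j\<in>F. c j * basis_elem j) \<in> (I_rel :: 'k ncpoly set)" "j \<in> F"
  then show "c j \<in> I_rel" by (rule indep[OF assms])
qed

end
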